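(* Let $M(i)$ be a maximal matching of $G(i)$, let $V_{cover}(i)$ be the set of endpoints of edges of $M(i)$, let $j\ge i$, and let $V'=V_{cover}(i\rightarrow j)$. Let $G'$ be the subgraph of $G(j)$ consisting of all edges of $G(j)$ between vertices of $V'$, together with, for each vertex $u\in V'$, up to $|V'|+1$ arbitrary edges of $G(j)$ from $u$ to vertices in $V\setminus V'$ (all such edges if there are fewer). Then for any maximal matching $M'$ of $G'$, the set of endpoints of edges of $M'$ is a vertex cover of $G(j)$ whose size is at most twice the size of a minimum vertex cover of $G(j)$.
   Context: A graph on vertex set $V$ undergoes a sequence of updates numbered $1,2,\dots$, each inserting or deleting one edge; $G(i)$ is the graph after the $i$-th update. A matching is maximal if no edge of the graph has both endpoints unmatched. $V_{cover}(i\rightarrow j)$ is obtained from $V_{cover}(i)$ by adding all endpoints of edges inserted during updates $i+1,\dots,j$; it is a vertex cover of $G(j)$. *)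

theory Defs
  imports Main
begin

definition is_edge :: "'a set \<Rightarrow> 'a set \<Rightarrow> bool" where
  "is_edge V e \<longleftrightarrow> e \<subseteq> V \<and> card e = 2"

definition is_graph :: "'a set \<Rightarrow> 'a set set \<Rightarrow> bool" where
  "is_graph V E \<longleftrightarrow> (\<forall>e\<in>E. is_edge V e)"

datatype 'a update = Ins "'a set" | Del "'a set"

fun apply_update :: "'a update \<Rightarrow> 'a set set \<Rightarrow> 'a set set" where
  "apply_update (Ins e) E = insert e E"
| "apply_update (Del e) E = E - {e}"

text \<open>G0 is the initial graph, ups k is the k-th update (k \<ge> 1); graph_at G0 ups i = G(i).\<close>
fun graph_at :: "'a set set \<Rightarrow> (nat \<Rightarrow> 'a update) \<Rightarrow> nat \<Rightarrow> 'a set set" where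
  "graph_at G0 ups 0 = G0"
| "graph_at G0 ups (Suc i) = apply_update (ups (Suc i)) (graph_at G0 ups i)"

definition valid_updates :: "'a set \<Rightarrow> (nat \<Rightarrow> 'a update) \<Rightarrow> bool" where
  "valid_updates V ups \<longleftrightarrow> (\<forall>k e. ups k = Ins e \<longrightarrow> is_edge V e)"

definition is_matching :: "'a set set \<Rightarrow> 'a set set \<Rightarrow> bool" where
  "is_matching E M \<longleftrightarrow> M \<subseteq> E \<and> (\<forall>e1\<in>M. \<forall>e2\<in>M. e1 \<noteq> e2 \<longrightarrow> e1 \<inter> e2 = {})"

definition is_maximal_matching :: "'a set set \<Rightarrow> 'a set set \<Rightarrow> bool" where
  "is_maximal_matching E M \<longleftrightarrow> is_matching E M \<and> (\<forall>e\<in>E. \<not> (e \<inter> \<Union>M = {}))"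

definition is_vertex_cover :: "'a set \<Rightarrow> 'a set set \<Rightarrow> 'a set \<Rightarrow> bool" where
  "is_vertex_cover V E C \<longleftrightarrow> C \<subseteq> V \<and> (\<forall>e\<in>E. e \<inter> C \<noteq> {})"

definition min_vertex_cover_size :: "'a set \<Rightarrow> 'a set set \<Rightarrow> nat" where
  "min_vertex_cover_size V E = Min {card C | C. is_vertex_cover V E C}"

text \<open>V_cover(i \<rightarrow> j): add endpoints of edges inserted during updates i+1..j.\<close>
definition cover_extend :: "'a set \<Rightarrow> (nat \<Rightarrow> 'a update) \<Rightarrow> nat \<Rightarrow> nat \<Rightarrow> 'a set" where
  "cover_extend C ups i j = C \<union> \<Union>{e. \<exists>k. i < k \<and> k \<le> j \<and> ups k = Ins e}"

definition out_edges :: "'a set set \<Rightarrow> 'a set \<Rightarrow> 'a \<Rightarrow> 'a set set" where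
  "out_edges E V' u = {e \<in> E. u \<in> e \<and> \<not> e \<subseteq> V'}"

definition is_sparsifier :: "'a set set \<Rightarrow> 'a set \<Rightarrow> 'a set set \<Rightarrow> bool" where
  "is_sparsifier E V' G' \<longleftrightarrow>
     G' \<subseteq> E \<and>
     {e \<in> E. e \<subseteq> V'} \<subseteq> G' \<and>
     (\<forall>e\<in>G'. e \<subseteq> V' \<or> (\<exists>u\<in>V'. e \<in> out_edges E V' u)) \<and>
     (\<forall>u\<in>V'. card (out_edges G' V' u) = min (card V' + 1) (card (out_edges E V' u)))"

end

theory Submission
  imports Defs
begin

lemma graph_at_graph:
  assumes "is_graph V G0" "valid_updates V ups"
  shows "is_graph V (graph_at G0 ups n)"
  using assms
  apply (induction n)
   apply simp
  apply (case_tac "ups (Suc n)")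
   apply (auto simp: is_graph_def valid_updates_def)
  done

lemma graph_at_new:
  assumes "e \<in> graph_at G0 ups j" "i \<le> j" "e \<notin> graph_at G0 ups i"
  shows "\<exists>k. i < k \<and> k \<le> j \<and> ups k = Ins e"
  using assms
proof (induction j)
  case 0 then show ?case by simp
next
  case (Suc j)
  show ?case
  proof (cases "i = Suc j")
    case True then show ?thesis using Suc by simp
  next
    case False
    then have ij: "i \<le> j" using Suc by simp
    show ?thesis
    proof (cases "e \<in> graph_at G0 ups j")
      case True
      from Suc.IH[OF True ij Suc.prems(3)] show ?thesis by auto
    next
      case False
      with Suc.prems(1) have "ups (Suc j) = Ins e"
        by (cases "ups (Suc j)") auto
      then show ?thesis using ij by (intro exI[of _ "Suc j"]) auto
    qed
  qed
qed

lemma two_elem: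
  assumes "card s = 2" "x \<in> s" "y \<in> s" "x \<noteq> y"
  shows "s = {x, y}"
proof -
  have "finite s" using assms(1) card.infinite by fastforce
  moreover have "{x,y} \<subseteq> s" "card {x,y} = 2" using assms by auto
  ultimately show ?thesis using assms(1) card_subset_eq by metis
qed

lemma matching_cover_bound:
  assumes fin: "finite V" and gr: "is_graph V E" and mm: "is_matching E M'"
    and C: "is_vertex_cover V E C"
  shows "card (\<Union>M') \<le> 2 * card C"
proof -
  have finE: "finite E"
  proof -
    have "E \<subseteq> Pow V" using gr by (auto simp: is_graph_def is_edge_def)
    then show ?thesis using fin finite_subset by blast
  qed
  have M'E: "M' \<subseteq> E" using mm by (simp add: is_matching_def)
  have finM: "finite M'" using finE M'E finite_subset by blast
  have c2: "\<And>e. e \<in> M' \<Longrightarrow> card e = 2" using M'E gr by (auto simp: is_graph_def is_edge_def)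
  have dis: "pairwise disjnt M'" using mm by (auto simp: is_matching_def pairwise_def disjnt_def)
  have "card (\<Union>M') = sum card M'"
    by (rule card_Union_disjoint[OF dis]) (metis c2 card.infinite zero_neq_numeral)
  also have "\<dots> = 2 * card M'" using c2 by simp
  finally have eq: "card (\<Union>M') = 2 * card M'" .
  define h where "h e = (SOME v. v \<in> e \<inter> C)" for e
  have hin: "\<And>e. e \<in> M' \<Longrightarrow> h e \<in> e \<inter> C"
  proof -
    fix e assume "e \<in> M'"
    then have "e \<inter> C \<noteq> {}" using C M'E by (auto simp: is_vertex_cover_def)
    then show "h e \<in> e \<inter> C" unfolding h_def by (metis ex_in_conv someI_ex)
  qed
  have "inj_on h M'"
  proof (rule inj_onI)
    fix a b assume a: "a \<in> M'" and b: "b \<in> M'" and "h a = h b"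
    then have "h a \<in> a \<inter> b" using hin by fastforce
    then show "a = b" using mm a b by (auto simp: is_matching_def)
  qed
  moreover have "h ` M' \<subseteq> C" using hin by auto
  moreover have "finite C" using C fin by (auto simp: is_vertex_cover_def intro: finite_subset)
  ultimately have "card M' \<le> card C" by (metis card_inj_on_le)
  then show ?thesis using eq by simp
qed

theorem lemma13:
  fixes V :: "'a set" and G0 :: "'a set set" and ups :: "nat \<Rightarrow> 'a update"
    and i j :: nat and M M' G' :: "'a set set"
  assumes "finite V"
    and "is_graph V G0"
    and "valid_updates V ups"
    and "is_maximal_matching (graph_at G0 ups i) M"
    and "i \<le> j"
    and "is_sparsifier (graph_at G0 ups j) (cover_extend (\<Union>M) ups i j) G'"
    and "is_maximal_matching G' M'"
  shows "is_vertex_cover V (graph_at G0 ups j) (\<Union>M')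
       \<and> card (\<Union>M') \<le> 2 * min_vertex_cover_size V (graph_at G0 ups j)"
proof -
  define E where "E = graph_at G0 ups j"
  define V' where "V' = cover_extend (\<Union>M) ups i j"
  have grE: "is_graph V E" unfolding E_def using graph_at_graph assms(2,3) by blast
  have grI: "is_graph V (graph_at G0 ups i)" using graph_at_graph assms(2,3) by blast
  have finE: "finite E"
  proof -
    have "E \<subseteq> Pow V" using grE by (auto simp: is_graph_def is_edge_def)
    then show ?thesis using assms(1) finite_subset by blast
  qed
  have c2: "\<And>e. e \<in> E \<Longrightarrow> card e = 2" "\<And>e. e \<in> E \<Longrightarrow> e \<subseteq> V"
    using grE by (auto simp: is_graph_def is_edge_def)
  have spars: "is_sparsifier E V' G'" using assms(6) unfolding E_def V'_def .
  have G'E: "G' \<subseteq> E" using spars by (simp add: is_sparsifier_def)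
  have mm: "is_maximal_matching G' M'" by fact
  have M'G': "M' \<subseteq> G'" using mm by (simp add: is_maximal_matching_def is_matching_def)
  have V'V: "V' \<subseteq> V"
  proof -
    have "\<Union>M \<subseteq> V" using assms(4) grI
      by (auto simp: is_maximal_matching_def is_matching_def is_graph_def is_edge_def)
    moreover have "\<Union>{e. \<exists>k. i < k \<and> k \<le> j \<and> ups k = Ins e} \<subseteq> V"
      using assms(3) by (auto simp: valid_updates_def is_edge_def)
    ultimately show ?thesis unfolding V'_def cover_extend_def by blast
  qed
  have finV': "finite V'" using V'V assms(1) finite_subset by blast
  have V'cov: "\<And>e. e \<in> E \<Longrightarrow> e \<inter> V' \<noteq> {}"
  proof -
    fix e assume e: "e \<in> E"
    show "e \<inter> V' \<noteq> {}"
    proof (cases "e \<in> graph_at G0 ups i")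
      case True
      then have "e \<inter> \<Union>M \<noteq> {}" using assms(4) by (auto simp: is_maximal_matching_def)
      then show ?thesis unfolding V'_def cover_extend_def by blast
    next
      case False
      then obtain k where "i < k" "k \<le> j" "ups k = Ins e"
        using graph_at_new[of e G0 ups j i] e assms(5) unfolding E_def by blast
      moreover have "e \<noteq> {}" using c2(1)[OF e] by auto
      ultimately show ?thesis unfolding V'_def cover_extend_def by blast
    qed
  qed
  have hitG': "\<And>e. e \<in> G' \<Longrightarrow> e \<inter> \<Union>M' \<noteq> {}"
    using mm by (simp add: is_maximal_matching_def)
  have cover: "\<And>e. e \<in> E \<Longrightarrow> e \<inter> \<Union>M' \<noteq> {}"
  proof (rule ccontr)
    fix e assume e: "e \<in> E" and nh: "\<not> e \<inter> \<Union>M' \<noteq> {}"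
    then have eG': "e \<notin> G'" using hitG' by blast
    then have "\<not> e \<subseteq> V'" using spars e by (auto simp: is_sparsifier_def)
    obtain u where u: "u \<in> e" "u \<in> V'" using V'cov[OF e] by blast
    have uM: "u \<notin> \<Union>M'" using nh u by blast
    have eout: "e \<in> out_edges E V' u" using e u \<open>\<not> e \<subseteq> V'\<close> by (simp add: out_edges_def)
    have sub: "out_edges G' V' u \<subseteq> out_edges E V' u" using G'E by (auto simp: out_edges_def)
    have finO: "finite (out_edges E V' u)" using finE by (simp add: out_edges_def)
    have cardeq: "card (out_edges G' V' u) = min (card V' + 1) (card (out_edges E V' u))"
      using spars u by (simp add: is_sparsifier_def)
    show False
    proof (cases "card (out_edges E V' u) \<le> card V' + 1")
      case True
      then have "card (out_edges G' V' u) = card (out_edges E V' u)" using cardeq by simp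
      then have "out_edges G' V' u = out_edges E V' u" using sub finO by (simp add: card_subset_eq)
      then have "e \<in> out_edges G' V' u" using eout by simp
      then have "e \<in> G'" by (simp add: out_edges_def)
      then show False using eG' by blast
    next
      case False
      then have cG: "card (out_edges G' V' u) = card V' + 1" using cardeq by simp
      define h where "h f = (SOME v. v \<in> V' \<and> (\<exists>f'\<in>M'. v \<in> f' \<and> (f - V') \<subseteq> f'))" for f
      have hprop: "h f \<in> V' \<and> (\<exists>f'\<in>M'. h f \<in> f' \<and> (f - V') \<subseteq> f')"
        if f: "f \<in> out_edges G' V' u" for f
      proof -
        have fG: "f \<in> G'" and uf: "u \<in> f" and nf: "\<not> f \<subseteq> V'" using f by (auto simp: out_edges_def)
        have fE: "f \<in> E" using fG G'E by blast
        obtain w where w: "w \<in> f" "w \<notin> V'" using nf by blast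
        have fuw: "f = {u, w}"
        proof -
          have "u \<noteq> w" using u w by blast
          then have "{u, w} \<subseteq> f" "card {u,w} = 2" using uf w by auto
          then show ?thesis using two_elem[OF c2(1)[OF fE] uf w(1)] \<open>u \<noteq> w\<close> by blast
        qed
        have fmV: "f - V' = {w}" using fuw u w by auto
        obtain f' where f': "f' \<in> M'" "f' \<inter> f \<noteq> {}" using hitG'[OF fG] by blast
        have "w \<in> f'" using f' fuw uM by auto
        have f'G: "f' \<in> G'" using f' M'G' by blast
        have "\<not> f' \<subseteq> V'" using \<open>w \<in> f'\<close> w by blast
        then obtain u' where "u' \<in> V'" "f' \<in> out_edges E V' u'"
          using spars f'G unfolding is_sparsifier_def by blast
        then have "u' \<in> V' \<and> (\<exists>f'\<in>M'. u' \<in> f' \<and> (f - V') \<subseteq> f')"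
          using f' \<open>w \<in> f'\<close> fmV by (auto simp: out_edges_def)
        then show ?thesis unfolding h_def by (rule someI)
      qed
      have "inj_on h (out_edges G' V' u)"
      proof (rule inj_onI)
        fix a b assume a: "a \<in> out_edges G' V' u" and b: "b \<in> out_edges G' V' u" and hab: "h a = h b"
        obtain fa where fa: "fa \<in> M'" "h a \<in> fa" "a - V' \<subseteq> fa" using hprop[OF a] by blast
        obtain fb where fb: "fb \<in> M'" "h b \<in> fb" "b - V' \<subseteq> fb" using hprop[OF b] by blast
        have "fa = fb"
        proof (rule ccontr)
          assume "fa \<noteq> fb"
          moreover have "\<forall>e1\<in>M'. \<forall>e2\<in>M'. e1 \<noteq> e2 \<longrightarrow> e1 \<inter> e2 = {}"
            using mm unfolding is_maximal_matching_def is_matching_def by blast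
          ultimately have "fa \<inter> fb = {}" using fa(1) fb(1) by simp
          moreover have "h a \<in> fa \<inter> fb" using fa(2) fb(2) hab by simp
          ultimately show False by simp
        qed
        have faE: "fa \<in> E" using fa M'G' G'E by blast
        have hV: "h a \<in> V'" using hprop[OF a] by blast
        have aG: "a \<in> E" "u \<in> a" "\<not> a \<subseteq> V'" using a G'E by (auto simp: out_edges_def)
        have bG: "b \<in> E" "u \<in> b" "\<not> b \<subseteq> V'" using b G'E by (auto simp: out_edges_def)
        obtain wa where wa: "wa \<in> a" "wa \<notin> V'" using aG by blast
        obtain wb where wb: "wb \<in> b" "wb \<notin> V'" using bG by blast
        have "wa \<in> fa" "wb \<in> fa" using wa wb fa fb \<open>fa = fb\<close> by auto
        have "u \<noteq> wa" using u wa by blast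
        have "u \<noteq> wb" using u wb by blast
        have "h a \<noteq> wa" using hV wa by blast
        have fa2: "fa = {h a, wa}" using two_elem[OF c2(1)[OF faE] fa(2) \<open>wa \<in> fa\<close> \<open>h a \<noteq> wa\<close>] .
        have "wa = wb" using fa2 \<open>wb \<in> fa\<close> hV wb by auto
        have "a = {u, wa}" using two_elem[OF c2(1)[OF aG(1)] aG(2) wa(1) \<open>u \<noteq> wa\<close>] .
        moreover have "b = {u, wb}" using two_elem[OF c2(1)[OF bG(1)] bG(2) wb(1) \<open>u \<noteq> wb\<close>] .
        ultimately show "a = b" using \<open>wa = wb\<close> by simp
      qed
      moreover have "h ` out_edges G' V' u \<subseteq> V'" using hprop by blast
      ultimately have "card (out_edges G' V' u) \<le> card V'" using finV' by (metis card_inj_on_le)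
      then show False using cG by simp
    qed
  qed
  have M'V: "\<Union>M' \<subseteq> V" using M'G' G'E c2(2) by blast
  have vc: "is_vertex_cover V E (\<Union>M')" using cover M'V by (simp add: is_vertex_cover_def)
  have VC: "is_vertex_cover V E V" using V'cov V'V by (auto simp: is_vertex_cover_def)
  define S where "S = {card C | C. is_vertex_cover V E C}"
  have "S \<subseteq> {..card V}" unfolding S_def using assms(1)
    by (auto simp: is_vertex_cover_def intro: card_mono)
  then have finS: "finite S" using finite_subset by blast
  have "card V \<in> S" using VC unfolding S_def by blast
  then have "Min S \<in> S" using finS by (metis Min_in empty_iff)
  then obtain C where C: "is_vertex_cover V E C" "Min S = card C" unfolding S_def by blast
  have "card (\<Union>M') \<le> 2 * card C"
    by (rule matching_cover_bound[OF assms(1) grE _ C(1)])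
       (use mm G'E in \<open>auto simp: is_maximal_matching_def is_matching_def\<close>)
  moreover have "min_vertex_cover_size V E = Min S" unfolding S_def min_vertex_cover_size_def by (rule refl)
  ultimately have "card (\<Union>M') \<le> 2 * min_vertex_cover_size V E" using C(2) by simp
  with vc show ?thesis unfolding E_def by (rule conjI)
qed

end
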